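(* For every digraph $D$, the inverse limit $\varprojlim(D/P)_{P\in\mathcal{P}(D)}$ is a compact Hausdorff space, the map $\Phi\colon D\to\varprojlim(D/P)_{P\in\mathcal{P}(D)}$, $x\mapsto(\varphi_P(x))_{P\in\mathcal{P}(D)}$, is an embedding (a homeomorphism onto its image), and $\Phi(D)$ is dense in $\varprojlim(D/P)_{P\in\mathcal{P}(D)}$. In particular the inverse limit is a Hausdorff compactification of $D$.
   Context: Digraphs have no loops and no parallel edges. $D$ is regarded as a topological space with the 1-complex topology: each edge is a copy of $[0,1]$ glued at its endvertices; basic open sets are open stars of radius $\varepsilon$ around vertices and open subintervals of edges. A vertex set $Y$ separates vertex sets $A,B$ if every $A$–$B$ path meets $Y$ or every $B$–$A$ path meets $Y$. A finite partition $P$ of $V(D)$ is admissible if any two distinct classes of $P$ are separated by some finite vertex set; $\mathcal{P}(D)$ is the set of admissible partitions, directed by $P\le P'$ iff every class of $P'$ is contained in a class of $P$. For $P\in\mathcal{P}(D)$, $D/P$ is the finite multi-digraph with vertex set $P$ where, for distinct $p_1,p_2\in P$: if $D$ has finitely many edges from $p_1$ to $p_2$, there is one edge $(e,p_1,p_2)$ for each such edge $e$ of $D$; if infinitely many, there is a single quotient edge $(p_1p_2,p_1,p_2)$. $D/P$ carries the 1-complex topology. For $P\le P'$ the bonding map $f_{P'P}\colon D/P'\to D/P$ sends a vertex $p'$ to the class $p\supseteq p'$; an edge $(e',p_1',p_2')$ with $p_1',p_2'$ in the same class $p$ is mapped entirely to $p$; otherwise, with $p_1'\subseteq p_1$, $p_2'\subseteq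 p_2$, $p_1\ne p_2$, it is mapped pointwise (corresponding points) onto the quotient edge from $p_1$ to $p_2$ if $D/P$ has one, and otherwise onto the edge $(e',p_1,p_2)$ of $D/P$. The inverse limit $\varprojlim(D/P)_{P\in\mathcal{P}(D)}$ is the subspace of $\prod_P D/P$ of all $(x_P)_P$ with $f_{P'P}(x_{P'})=x_P$ for all $P\le P'$. $\varphi_P\colon D\to D/P$: a vertex $v$ goes to the class containing $v$; an inner point $z$ of an edge $vw$ goes to the class containing $v,w$ if they lie in the same class, and otherwise to the corresponding point on the edge of $D/P$ from the class of $v$ to the class of $w$ (the copy of $vw$, or the quotient edge). *)

theory Defs
  imports "HOL-Analysis.Analysis"
begin

text \<open>Points of a 1-complex with vertex type 'n and edge type 'e: a vertex, or an
inner point of an edge e at parameter t in (0,1) (distance t from the source of e,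
distance 1-t from the target of e).\<close>
datatype ('n,'e) cpt = CV 'n | CE 'e real

definition cstar :: "'e set \<Rightarrow> ('e \<Rightarrow> 'n) \<Rightarrow> ('e \<Rightarrow> 'n) \<Rightarrow> 'n \<Rightarrow> real \<Rightarrow> ('n,'e) cpt set" where
  "cstar Ed src tgt n eps =
     {CV n}
     \<union> {CE e t | e t. e \<in> Ed \<and> src e = n \<and> 0 < t \<and> t < 1 \<and> t < eps}
     \<union> {CE e t | e t. e \<in> Ed \<and> tgt e = n \<and> 0 < t \<and> t < 1 \<and> 1 - t < eps}"

definition complex_top :: "'n set \<Rightarrow> 'e set \<Rightarrow> ('e \<Rightarrow> 'n) \<Rightarrow> ('e \<Rightarrow> 'n) \<Rightarrow> ('n,'e) cpt topology" where
  "complex_top N Ed src tgt = topology_generated_by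
     ({cstar Ed src tgt n eps | n eps. n \<in> N \<and> 0 < eps}
      \<union> {{CE e t | t. a < t \<and> t < b} | e a b. e \<in> Ed \<and> 0 \<le> a \<and> a < b \<and> b \<le> 1})"

text \<open>A digraph is given by a vertex set V and an edge set E of ordered pairs
(so no parallel edges), with E a subset of V x V and no loops.
The topological space D: vertices CV v, inner points CE (v,w) t.\<close>
definition dtop :: "'v set \<Rightarrow> ('v \<times> 'v) set \<Rightarrow> ('v, 'v \<times> 'v) cpt topology" where
  "dtop V E = complex_top V E fst snd"

definition dpath :: "('v \<times> 'v) set \<Rightarrow> 'v list \<Rightarrow> bool" where
  "dpath E xs \<longleftrightarrow> xs \<noteq> [] \<and> distinct xs \<and> (\<forall>i. Suc i < length xs \<longrightarrow> (xs ! i, xs ! Suc i) \<in> E)"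

definition AB_path :: "('v \<times> 'v) set \<Rightarrow> 'v set \<Rightarrow> 'v set \<Rightarrow> 'v list \<Rightarrow> bool" where
  "AB_path E A B xs \<longleftrightarrow> dpath E xs \<and> hd xs \<in> A \<and> last xs \<in> B"

definition separates :: "('v \<times> 'v) set \<Rightarrow> 'v set \<Rightarrow> 'v set \<Rightarrow> 'v set \<Rightarrow> bool" where
  "separates E Y A B \<longleftrightarrow>
     (\<forall>xs. AB_path E A B xs \<longrightarrow> set xs \<inter> Y \<noteq> {}) \<or> (\<forall>xs. AB_path E B A xs \<longrightarrow> set xs \<inter> Y \<noteq> {})"

definition admissible :: "'v set \<Rightarrow> ('v \<times> 'v) set \<Rightarrow> 'v set set \<Rightarrow> bool" where
  "admissible V E P \<longleftrightarrow> finite P \<and> \<Union>P = V \<and> {} \<notin> P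
     \<and> (\<forall>p\<in>P. \<forall>q\<in>P. p \<noteq> q \<longrightarrow> p \<inter> q = {})
     \<and> (\<forall>p\<in>P. \<forall>q\<in>P. p \<noteq> q \<longrightarrow> (\<exists>Y. finite Y \<and> Y \<subseteq> V \<and> separates E Y p q))"

definition adm_parts :: "'v set \<Rightarrow> ('v \<times> 'v) set \<Rightarrow> 'v set set set" where
  "adm_parts V E = {P. admissible V E P}"

definition refines_le :: "'v set set \<Rightarrow> 'v set set \<Rightarrow> bool" where
  "refines_le P P' \<longleftrightarrow> (\<forall>p'\<in>P'. \<exists>p\<in>P. p' \<subseteq> p)"

datatype 'v qedge = OrigE "'v \<times> 'v" | QuotE "'v set" "'v set"

definition cls :: "'v set set \<Rightarrow> 'v \<Rightarrow> 'v set" where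
  "cls P v = (THE p. p \<in> P \<and> v \<in> p)"

definition edges_between :: "('v \<times> 'v) set \<Rightarrow> 'v set \<Rightarrow> 'v set \<Rightarrow> ('v \<times> 'v) set" where
  "edges_between E p q = {e \<in> E. fst e \<in> p \<and> snd e \<in> q}"

definition qedges :: "('v \<times> 'v) set \<Rightarrow> 'v set set \<Rightarrow> 'v qedge set" where
  "qedges E P =
     {OrigE e | e. e \<in> E \<and> cls P (fst e) \<noteq> cls P (snd e)
                 \<and> finite (edges_between E (cls P (fst e)) (cls P (snd e)))}
     \<union> {QuotE p q | p q. p \<in> P \<and> q \<in> P \<and> p \<noteq> q \<and> infinite (edges_between E p q)}"

fun qsrc :: "'v set set \<Rightarrow> 'v qedge \<Rightarrow> 'v set" where
  "qsrc P (OrigE e) = cls P (fst e)"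
| "qsrc P (QuotE p q) = p"

fun qtgt :: "'v set set \<Rightarrow> 'v qedge \<Rightarrow> 'v set" where
  "qtgt P (OrigE e) = cls P (snd e)"
| "qtgt P (QuotE p q) = q"

definition quot_top :: "('v \<times> 'v) set \<Rightarrow> 'v set set \<Rightarrow> ('v set, 'v qedge) cpt topology" where
  "quot_top E P = complex_top P (qedges E P) (qsrc P) (qtgt P)"

definition up :: "'v set set \<Rightarrow> 'v set \<Rightarrow> 'v set" where
  "up P p' = (THE p. p \<in> P \<and> p' \<subseteq> p)"

text \<open>bond E P' P is the bonding map D/P' \<rightarrow> D/P for P \<le> P'.\<close>
fun bond :: "('v \<times> 'v) set \<Rightarrow> 'v set set \<Rightarrow> 'v set set \<Rightarrow> ('v set, 'v qedge) cpt \<Rightarrow> ('v set, 'v qedge) cpt" where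
  "bond E P' P (CV p') = CV (up P p')"
| "bond E P' P (CE e' t) =
     (let p1 = up P (qsrc P' e'); p2 = up P (qtgt P' e') in
      if p1 = p2 then CV p1
      else if QuotE p1 p2 \<in> qedges E P then CE (QuotE p1 p2) t
      else CE e' t)"

fun phi :: "('v \<times> 'v) set \<Rightarrow> 'v set set \<Rightarrow> ('v, 'v \<times> 'v) cpt \<Rightarrow> ('v set, 'v qedge) cpt" where
  "phi E P (CV v) = CV (cls P v)"
| "phi E P (CE e t) =
     (let p1 = cls P (fst e); p2 = cls P (snd e) in
      if p1 = p2 then CV p1
      else if QuotE p1 p2 \<in> qedges E P then CE (QuotE p1 p2) t
      else CE (OrigE e) t)"

definition invlim_top :: "'v set \<Rightarrow> ('v \<times> 'v) set \<Rightarrow> ('v set set \<Rightarrow> ('v set, 'v qedge) cpt) topology" where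
  "invlim_top V E =
     subtopology (product_topology (quot_top E) (adm_parts V E))
       {x. \<forall>P\<in>adm_parts V E. \<forall>P'\<in>adm_parts V E. refines_le P P' \<longrightarrow> bond E P' P (x P') = x P}"

definition Phi :: "'v set \<Rightarrow> ('v \<times> 'v) set \<Rightarrow> ('v, 'v \<times> 'v) cpt \<Rightarrow> ('v set set \<Rightarrow> ('v set, 'v qedge) cpt)" where
  "Phi V E x = (\<lambda>P\<in>adm_parts V E. phi E P x)"

end

theory Submission
  imports Defs
begin


lemma ct_topspace:
  "topspace (complex_top N Ed s t) = CV ` N \<union> {CE e x | e x. e \<in> Ed \<and> 0 < x \<and> x < 1}"
proof
  show "topspace (complex_top N Ed s t) \<subseteq> CV ` N \<union> {CE e x | e x. e \<in> Ed \<and> 0 < x \<and> x < 1}"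
  proof
    fix y assume "y \<in> topspace (complex_top N Ed s t)"
    then obtain G where G: "G \<in> ({cstar Ed s t n eps | n eps. n \<in> N \<and> 0 < eps}
      \<union> {{CE e t | t. a < t \<and> t < b} | e a b. e \<in> Ed \<and> 0 \<le> a \<and> a < b \<and> b \<le> 1})" "y \<in> G"
      unfolding complex_top_def topology_generated_by_topspace by blast
    then show "y \<in> CV ` N \<union> {CE e x | e x. e \<in> Ed \<and> 0 < x \<and> x < 1}"
    proof (elim UnE CollectE exE conjE)
      fix n eps assume "G = cstar Ed s t n eps" "n \<in> N"
      then show ?thesis using G(2) by (auto simp: cstar_def)
    next
      fix e a b assume "G = {CE e t | t. a < t \<and> t < b}" "e \<in> Ed" "0 \<le> a" "a < b" "b \<le> 1"
      then show ?thesis using G(2) by auto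
    qed
  qed
  have "CV n \<in> topspace (complex_top N Ed s t)" if "n \<in> N" for n
    unfolding complex_top_def topology_generated_by_topspace
    apply (rule UnionI[of "cstar Ed s t n 1"])
     apply (rule UnI1, rule CollectI, rule exI[of _ n], rule exI[of _ 1]) using that apply simp
    apply (simp add: cstar_def)
    done
  moreover have "CE e x \<in> topspace (complex_top N Ed s t)" if "e \<in> Ed" "0 < x" "x < 1" for e x
    unfolding complex_top_def topology_generated_by_topspace
    apply (rule UnionI[of "{CE e t | t. 0 < t \<and> t < 1}"])
     apply (rule UnI2, rule CollectI, rule exI[of _ e], rule exI[of _ 0], rule exI[of _ 1]) using that apply simp
    using that apply blast
    done
  ultimately show "CV ` N \<union> {CE e x | e x. e \<in> Ed \<and> 0 < x \<and> x < 1} \<subseteq> topspace (complex_top N Ed s t)"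
    by auto
qed

lemma ct_CV[simp]: "CV n \<in> topspace (complex_top N Ed s t) \<longleftrightarrow> n \<in> N"
  by (auto simp: ct_topspace)

lemma ct_CE[simp]: "CE e x \<in> topspace (complex_top N Ed s t) \<longleftrightarrow> e \<in> Ed \<and> 0 < x \<and> x < 1"
  by (auto simp: ct_topspace)

lemma ct_open_star: "n \<in> N \<Longrightarrow> 0 < eps \<Longrightarrow> openin (complex_top N Ed s t) (cstar Ed s t n eps)"
  unfolding complex_top_def by (rule topology_generated_by_Basis) blast

lemma ct_open_int: "e \<in> Ed \<Longrightarrow> 0 \<le> a \<Longrightarrow> a < b \<Longrightarrow> b \<le> 1 \<Longrightarrow>
   openin (complex_top N Ed s t) {CE e x | x. a < x \<and> x < b}"
  unfolding complex_top_def by (rule topology_generated_by_Basis) blast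

lemma mem_cstar_CV[simp]: "CV m \<in> cstar Ed s t n eps \<longleftrightarrow> m = n"
  by (auto simp: cstar_def)

lemma mem_cstar_CE[simp]: "CE e x \<in> cstar Ed s t n eps \<longleftrightarrow>
   e \<in> Ed \<and> 0 < x \<and> x < 1 \<and> ((s e = n \<and> x < eps) \<or> (t e = n \<and> 1 - x < eps))"
  by (auto simp: cstar_def)

lemma cstar_disj: "n \<noteq> m \<Longrightarrow> disjnt (cstar Ed s t n (1/2)) (cstar Ed s t m (1/2))"
  unfolding disjnt_iff by (intro allI, case_tac x) auto

lemma ct_Hausdorff: "Hausdorff_space (complex_top N Ed s t)"
  unfolding Hausdorff_space_def
proof (intro allI impI, elim conjE)
  fix y z assume y: "y \<in> topspace (complex_top N Ed s t)" and z: "z \<in> topspace (complex_top N Ed s t)"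
    and yz: "y \<noteq> z"
  let ?X = "complex_top N Ed s t"
  have cvce: "\<exists>U V. openin ?X U \<and> openin ?X V \<and> CV n \<in> U \<and> CE e x \<in> V \<and> disjnt U V"
    if "n \<in> N" "e \<in> Ed" "0 < x" "x < 1" for n e x
  proof -
    define d where "d = min x (1 - x) / 2"
    have d: "0 < d" "d < x" "x < 1 - d" using that by (auto simp: d_def min_def field_simps split: if_splits)
    show ?thesis
      apply (rule exI[of _ "cstar Ed s t n d"], rule exI[of _ "{CE e u | u. d < u \<and> u < 1 - d}"])
      using d that by (auto simp: ct_open_star ct_open_int disjnt_def)
  qed
  show "\<exists>U V. openin ?X U \<and> openin ?X V \<and> y \<in> U \<and> z \<in> V \<and> disjnt U V"
  proof (cases y)
    case (CV n)
    note yn = this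
    show ?thesis
    proof (cases z)
      case (CV m)
      show ?thesis
        apply (rule exI[of _ "cstar Ed s t n (1/2)"], rule exI[of _ "cstar Ed s t m (1/2)"])
        using y z yz yn CV by (auto simp: ct_open_star cstar_disj)
    next
      case (CE e x)
      then show ?thesis using cvce[of n e x] y z yn by auto
    qed
  next
    case (CE e x)
    note ye = this
    show ?thesis
    proof (cases z)
      case (CV m)
      then show ?thesis using cvce[of m e x] y z ye by (metis ct_CE ct_CV disjnt_sym)
    next
      case (CE e' x')
      show ?thesis
      proof (cases "e = e'")
        case False
        show ?thesis
          apply (rule exI[of _ "{CE e u | u. 0 < u \<and> u < 1}"], rule exI[of _ "{CE e' u | u. 0 < u \<and> u < 1}"])
          using y z ye CE False by (auto simp: ct_open_int disjnt_def)
      next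
        case True
        then have "x \<noteq> x'" using yz ye CE by auto
        then consider "x < x'" | "x' < x" by linarith
        then show ?thesis
        proof cases
          case 1
          show ?thesis
            apply (rule exI[of _ "{CE e u | u. 0 < u \<and> u < (x+x')/2}"], rule exI[of _ "{CE e' u | u. (x+x')/2 < u \<and> u < 1}"])
            apply (intro conjI ct_open_int) using y z ye CE True 1 by (auto simp: disjnt_def)
        next
          case 2
          show ?thesis
            apply (rule exI[of _ "{CE e u | u. (x+x')/2 < u \<and> u < 1}"], rule exI[of _ "{CE e' u | u. 0 < u \<and> u < (x+x')/2}"])
            apply (intro conjI ct_open_int) using y z ye CE True 2 by (auto simp: disjnt_def)
        qed
      qed
    qed
  qed
qed



lemma ct_compact:
  assumes fin: "finite N" "finite Ed" and ends: "\<And>e. e \<in> Ed \<Longrightarrow> s e \<in> N \<and> t e \<in> N"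
  shows "compact_space (complex_top N Ed s t)"
proof -
  let ?X = "complex_top N Ed s t"
  let ?S = "{cstar Ed s t n eps | n eps. n \<in> N \<and> 0 < eps}
      \<union> {{CE e t | t. a < t \<and> t < b} | e a b. e \<in> Ed \<and> 0 \<le> a \<and> a < b \<and> b \<le> 1}"
  define \<gamma> where "\<gamma> e x = (if x \<le> 0 then CV (s e) else if x \<ge> 1 then CV (t e) else CE e x)" for e x
  have cont: "continuous_map (top_of_set {0..1}) ?X (\<gamma> e)" if e: "e \<in> Ed" for e
  proof -
    have "continuous_map (top_of_set {0..1}) (topology_generated_by ?S) (\<gamma> e)"
    proof (rule continuous_on_generated_topo)
      fix U assume "U \<in> ?S"
      then show "openin (top_of_set {0..1}) (\<gamma> e -` U \<inter> topspace (top_of_set {0..1}))"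
      proof (elim UnE CollectE exE conjE)
        fix n eps assume U: "U = cstar Ed s t n eps" and n: "n \<in> N" and eps: "0 < eps"
        define T where "T = (if s e = n then {..<min eps 1} else {}) \<union> (if t e = n then {max (1-eps) 0<..} else {})"
        have "\<gamma> e -` U \<inter> topspace (top_of_set {0..1}) = T \<inter> {0..1}"
        proof (rule set_eqI)
          fix x show "x \<in> \<gamma> e -` U \<inter> topspace (top_of_set {0..1}) \<longleftrightarrow> x \<in> T \<inter> {0..1}"
            using eps e by (auto simp: U T_def \<gamma>_def)
        qed
        moreover have "open T" unfolding T_def by auto
        ultimately show ?thesis by (auto simp: openin_subtopology)
      next
        fix e' a b assume U: "U = {CE e' t | t. a < t \<and> t < b}" and ab: "0 \<le> a" "a < b" "b \<le> 1"
        define T where "T = (if e' = e then {a<..<b} else {})"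
        have "\<gamma> e -` U \<inter> topspace (top_of_set {0..1}) = T \<inter> {0..1}"
        proof (rule set_eqI)
          fix x show "x \<in> \<gamma> e -` U \<inter> topspace (top_of_set {0..1}) \<longleftrightarrow> x \<in> T \<inter> {0..1}"
            using ab by (auto simp: U T_def \<gamma>_def)
        qed
        moreover have "open T" unfolding T_def by auto
        ultimately show ?thesis by (auto simp: openin_subtopology)
      qed
    next
      show "\<gamma> e ` topspace (top_of_set {0..1}) \<subseteq> \<Union> ?S"
        using ct_topspace[of N Ed s t, unfolded complex_top_def topology_generated_by_topspace] ends[OF e] e
        by (auto simp: \<gamma>_def)
    qed
    then show ?thesis unfolding complex_top_def .
  qed
  have cpt: "compactin ?X (\<gamma> e ` {0..1})" if "e \<in> Ed" for e
    apply (rule image_compactin[OF _ cont[OF that]])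
    by (simp add: compactin_subtopology compactin_euclidean_iff)
  have "topspace ?X = (\<Union>e\<in>Ed. \<gamma> e ` {0..1}) \<union> (\<Union>n\<in>N. {CV n})"
  proof
    show "topspace ?X \<subseteq> (\<Union>e\<in>Ed. \<gamma> e ` {0..1}) \<union> (\<Union>n\<in>N. {CV n})"
    proof
      fix y assume "y \<in> topspace ?X"
      then consider n where "y = CV n" "n \<in> N" | e x where "y = CE e x" "e \<in> Ed" "0 < x" "x < 1"
        by (auto simp: ct_topspace)
      then show "y \<in> (\<Union>e\<in>Ed. \<gamma> e ` {0..1}) \<union> (\<Union>n\<in>N. {CV n})"
      proof cases
        case 1 then show ?thesis by auto
      next
        case 2
        then have "y = \<gamma> e x" by (auto simp: \<gamma>_def)
        moreover have "x \<in> {0..1}" using 2 by auto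
        ultimately have "y \<in> \<gamma> e ` {0..1}" by blast
        then show ?thesis using 2 by blast
      qed
    qed
    show "(\<Union>e\<in>Ed. \<gamma> e ` {0..1}) \<union> (\<Union>n\<in>N. {CV n}) \<subseteq> topspace ?X"
      using cpt compactin_subset_topspace by (metis (no_types, lifting) UN_least Un_least ct_CV singletonD subsetI)
  qed
  moreover have "compactin ?X ((\<Union>e\<in>Ed. \<gamma> e ` {0..1}) \<union> (\<Union>n\<in>N. {CV n}))"
    apply (intro compactin_Un compactin_Union)
    using fin cpt by auto
  ultimately show ?thesis unfolding compact_space_def by simp
qed

lemma cell_cont:
  assumes fvN: "\<And>n. n \<in> N \<Longrightarrow> fv n \<in> N'"
   and endN: "\<And>e. e \<in> Ed \<Longrightarrow> s e \<in> N \<and> t e \<in> N"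
   and ge: "\<And>e. e \<in> Ed \<Longrightarrow> fv (s e) \<noteq> fv (t e) \<Longrightarrow> g e \<in> Ed' \<and> s' (g e) = fv (s e) \<and> t' (g e) = fv (t e)"
   and fV: "\<And>n. n \<in> N \<Longrightarrow> f (CV n) = CV (fv n)"
   and fE: "\<And>e x. e \<in> Ed \<Longrightarrow> 0 < x \<Longrightarrow> x < 1 \<Longrightarrow>
              f (CE e x) = (if fv (s e) = fv (t e) then CV (fv (s e)) else CE (g e) x)"
  shows "continuous_map (complex_top N Ed s t) (complex_top N' Ed' s' t') f"
proof -
  let ?X = "complex_top N Ed s t"
  let ?S = "{cstar Ed' s' t' n eps | n eps. n \<in> N' \<and> 0 < eps}
      \<union> {{CE e t | t. a < t \<and> t < b} | e a b. e \<in> Ed' \<and> 0 \<le> a \<and> a < b \<and> b \<le> 1}"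
  have "continuous_map ?X (topology_generated_by ?S) f"
  proof (rule continuous_on_generated_topo)
    fix U assume "U \<in> ?S"
    then show "openin ?X (f -` U \<inter> topspace ?X)"
    proof (elim UnE CollectE exE conjE)
      fix n' eps assume U: "U = cstar Ed' s' t' n' eps" and n: "n' \<in> N'" and eps: "0 < eps"
      define R where "R = \<Union> ((\<lambda>n. cstar Ed s t n eps) ` {n\<in>N. fv n = n'})
          \<union> \<Union> ((\<lambda>e. {CE e x|x. 0 < x \<and> x < 1}) ` {e\<in>Ed. fv (s e) = fv (t e) \<and> fv (s e) = n'})"
      have "f -` U \<inter> topspace ?X = R"
      proof (rule set_eqI)
        fix y show "y \<in> f -` U \<inter> topspace ?X \<longleftrightarrow> y \<in> R"
        proof (cases y)
          case (CV m)
          then show ?thesis using fV by (auto simp: U R_def)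
        next
          case (CE e x)
          show ?thesis
          proof (cases "e \<in> Ed \<and> 0 < x \<and> x < 1")
            case False
            then show ?thesis using CE by (auto simp: U R_def)
          next
            case True
            then have ends: "s e \<in> N" "t e \<in> N" using endN by auto
            show ?thesis
            proof (cases "fv (s e) = fv (t e)")
              case True2: True
              then show ?thesis using CE True fE ends by (auto simp: U R_def)
            next
              case False2: False
              then show ?thesis using CE True fE ends ge[of e] by (auto simp: U R_def)
            qed
          qed
        qed
      qed
      moreover have "openin ?X R"
        unfolding R_def
        by (intro openin_Un openin_Union) (auto intro!: ct_open_star ct_open_int simp: eps)
      ultimately show ?thesis by simp
    next
      fix e' a b assume U: "U = {CE e' t | t. a < t \<and> t < b}" and e': "e' \<in> Ed'" and ab: "0 \<le> a" "a < b" "b \<le> 1"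
      define R where "R = \<Union> ((\<lambda>e. {CE e x|x. a < x \<and> x < b}) ` {e\<in>Ed. fv (s e) \<noteq> fv (t e) \<and> g e = e'}) \<inter> topspace ?X"
      have "f -` U \<inter> topspace ?X = R"
      proof (rule set_eqI)
        fix y show "y \<in> f -` U \<inter> topspace ?X \<longleftrightarrow> y \<in> R"
        proof (cases y)
          case (CV m)
          then show ?thesis using fV by (auto simp: U R_def)
        next
          case (CE e x)
          show ?thesis
          proof (cases "e \<in> Ed \<and> 0 < x \<and> x < 1")
            case False
            then show ?thesis using CE ab by (auto simp: U R_def)
          next
            case True
            show ?thesis
            proof (cases "fv (s e) = fv (t e)")
              case True2: True
              then show ?thesis using CE True fE by (auto simp: U R_def)
            next
              case False2: False
              then show ?thesis using CE True fE ab by (auto simp: U R_def)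
            qed
          qed
        qed
      qed
      moreover have "openin ?X R"
        unfolding R_def
        by (intro openin_Int openin_Union) (auto intro!: ct_open_int simp: ab)
      ultimately show ?thesis by simp
    qed
  next
    show "f ` topspace ?X \<subseteq> \<Union> ?S"
    proof -
      have "f y \<in> topspace (complex_top N' Ed' s' t')" if "y \<in> topspace ?X" for y
      proof -
        from that consider n where "y = CV n" "n \<in> N" | e x where "y = CE e x" "e \<in> Ed" "0 < x" "x < 1"
          by (auto simp: ct_topspace)
        then show ?thesis
        proof cases
          case 1 then show ?thesis using fV fvN by auto
        next
          case 2 then show ?thesis using fE ge[of e] endN[of e] fvN by auto
        qed
      qed
      moreover have "\<Union> ?S = topspace (complex_top N' Ed' s' t')" unfolding complex_top_def by simp
      ultimately show ?thesis by (simp add: image_subset_iff)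
    qed
  qed
  then show ?thesis unfolding complex_top_def[of N' Ed' s' t'] .
qed



lemma adm_fin: "admissible V E P \<Longrightarrow> finite P" by (simp add: admissible_def)
lemma adm_Un: "admissible V E P \<Longrightarrow> \<Union>P = V" by (simp add: admissible_def)
lemma adm_empty: "admissible V E P \<Longrightarrow> {} \<notin> P" by (simp add: admissible_def)
lemma adm_disj0: "admissible V E P \<Longrightarrow> p \<in> P \<Longrightarrow> q \<in> P \<Longrightarrow> p \<noteq> q \<Longrightarrow> p \<inter> q = {}"
  by (simp add: admissible_def)
lemma adm_sep: "admissible V E P \<Longrightarrow> p \<in> P \<Longrightarrow> q \<in> P \<Longrightarrow> p \<noteq> q \<Longrightarrow> \<exists>Y. finite Y \<and> Y \<subseteq> V \<and> separates E Y p q"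
  by (simp add: admissible_def)

lemma adm_disj: "admissible V E P \<Longrightarrow> p \<in> P \<Longrightarrow> q \<in> P \<Longrightarrow> v \<in> p \<Longrightarrow> v \<in> q \<Longrightarrow> p = q"
  using adm_disj0 by blast

lemma adm_cls:
  assumes "admissible V E P" "v \<in> V"
  shows "cls P v \<in> P \<and> v \<in> cls P v"
proof -
  from assms obtain p where p: "p \<in> P" "v \<in> p" using adm_Un by blast
  have "cls P v = p" unfolding cls_def
  proof (rule the_equality)
    show "p \<in> P \<and> v \<in> p" using p by blast
    fix q assume "q \<in> P \<and> v \<in> q"
    then show "q = p" using p adm_disj[OF assms(1)] by blast
  qed
  then show ?thesis using p by simp
qed

lemma adm_cls_eq:
  assumes "admissible V E P" "p \<in> P" "v \<in> p"
  shows "cls P v = p"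
proof -
  have "v \<in> V" using assms adm_Un by blast
  then have "cls P v \<in> P" "v \<in> cls P v" using adm_cls[OF assms(1)] by auto
  then show ?thesis using adm_disj[OF assms(1) _ assms(2) _ assms(3)] by blast
qed

lemma adm_sub: "admissible V E P \<Longrightarrow> p \<in> P \<Longrightarrow> p \<subseteq> V"
  using adm_Un by blast

lemma adm_ne: "admissible V E P \<Longrightarrow> p \<in> P \<Longrightarrow> p \<noteq> {}"
  using adm_empty by blast

lemma up_eq:
  assumes "admissible V E P" "admissible V E P'" "p' \<in> P'" "p \<in> P" "p' \<subseteq> p"
  shows "up P p' = p"
  unfolding up_def
proof (rule the_equality)
  show "p \<in> P \<and> p' \<subseteq> p" using assms by simp
  fix q assume q: "q \<in> P \<and> p' \<subseteq> q"
  obtain v where "v \<in> p'" using adm_ne[OF assms(2,3)] by blast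
  then show "q = p" using q assms(3,4,5) adm_disj[OF assms(1), of q p v] by blast
qed

lemma up_mem:
  assumes "admissible V E P" "admissible V E P'" "refines_le P P'" "p' \<in> P'"
  shows "up P p' \<in> P \<and> p' \<subseteq> up P p'"
proof -
  obtain p where "p \<in> P" "p' \<subseteq> p" using assms unfolding refines_le_def by blast
  then show ?thesis using up_eq[OF assms(1,2,4)] by simp
qed

lemma cls_up:
  assumes "admissible V E P" "admissible V E P'" "refines_le P P'" "v \<in> V"
  shows "up P (cls P' v) = cls P v"
proof -
  have a: "cls P' v \<in> P'" "v \<in> cls P' v" using adm_cls[OF assms(2,4)] by auto
  then have "up P (cls P' v) \<in> P" "cls P' v \<subseteq> up P (cls P' v)" using up_mem[OF assms(1-3)] by auto
  then show ?thesis using adm_cls_eq[OF assms(1)] a by blast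
qed

lemma separates_mono:
  "separates E Y A B \<Longrightarrow> A' \<subseteq> A \<Longrightarrow> B' \<subseteq> B \<Longrightarrow> separates E Y A' B'"
  unfolding separates_def AB_path_def by blast

definition PF :: "'v set \<Rightarrow> 'v set \<Rightarrow> 'v set set" where
  "PF V F = (\<lambda>u. {u}) ` F \<union> (if V - F = {} then {} else {V - F})"

lemma PF_adm:
  assumes "finite F" "F \<subseteq> V"
  shows "admissible V E (PF V F)"
  unfolding admissible_def
proof (intro conjI ballI impI)
  show "finite (PF V F)" using assms by (simp add: PF_def)
  show "\<Union> (PF V F) = V" using assms by (auto simp: PF_def)
  show "{} \<notin> PF V F" by (auto simp: PF_def)
  fix p q assume pq: "p \<in> PF V F" "q \<in> PF V F" "p \<noteq> q"
  then show "p \<inter> q = {}" by (auto simp: PF_def split: if_splits)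
  show "\<exists>Y. finite Y \<and> Y \<subseteq> V \<and> separates E Y p q"
  proof (intro exI conjI)
    show "finite F" "F \<subseteq> V" using assms by auto
    have "p \<subseteq> F \<or> q \<subseteq> F" using pq by (auto simp: PF_def split: if_splits)
    then show "separates E F p q"
    proof
      assume "p \<subseteq> F"
      then show ?thesis unfolding separates_def AB_path_def dpath_def
        by (metis disjoint_iff hd_in_set in_mono)
    next
      assume "q \<subseteq> F"
      then show ?thesis unfolding separates_def AB_path_def dpath_def
        by (metis disjoint_iff last_in_set in_mono)
    qed
  qed
qed

lemma PF_cls: "finite F \<Longrightarrow> F \<subseteq> V \<Longrightarrow> u \<in> F \<Longrightarrow> cls (PF V F) u = {u}"
  by (rule adm_cls_eq[OF PF_adm]) (auto simp: PF_def)

definition PM :: "'v set set \<Rightarrow> 'v set set \<Rightarrow> 'v set set" where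
  "PM P Q = {p \<inter> q | p q. p \<in> P \<and> q \<in> Q \<and> p \<inter> q \<noteq> {}}"

lemma PM_adm:
  assumes P: "admissible V E P" and Q: "admissible V E Q"
  shows "admissible V E (PM P Q)"
  unfolding admissible_def
proof (intro conjI ballI impI)
  have "PM P Q \<subseteq> (\<lambda>(p,q). p \<inter> q) ` (P \<times> Q)" by (auto simp: PM_def)
  moreover have "finite P" "finite Q" using P Q adm_fin by auto
  ultimately show "finite (PM P Q)" by (meson finite_SigmaI finite_imageI finite_subset)
  show "\<Union> (PM P Q) = V"
  proof
    show "\<Union> (PM P Q) \<subseteq> V" using P adm_Un by (auto simp: PM_def)
    show "V \<subseteq> \<Union> (PM P Q)"
    proof
      fix v assume v: "v \<in> V"
      then have "cls P v \<in> P" "v \<in> cls P v" "cls Q v \<in> Q" "v \<in> cls Q v" using adm_cls[OF P v] adm_cls[OF Q v] by auto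
      then show "v \<in> \<Union> (PM P Q)" unfolding PM_def by blast
    qed
  qed
  show "{} \<notin> PM P Q" by (auto simp: PM_def)
  fix a b assume ab: "a \<in> PM P Q" "b \<in> PM P Q" "a \<noteq> b"
  then obtain p q p' q' where pq: "a = p \<inter> q" "b = p' \<inter> q'" "p \<in> P" "q \<in> Q" "p' \<in> P" "q' \<in> Q"
    by (auto simp: PM_def)
  show "a \<inter> b = {}"
  proof (rule ccontr)
    assume "a \<inter> b \<noteq> {}"
    then obtain v where "v \<in> a" "v \<in> b" by blast
    then have "p = p'" "q = q'" using pq adm_disj[OF P] adm_disj[OF Q] by blast+
    then show False using ab pq by simp
  qed
  have "p \<noteq> p' \<or> q \<noteq> q'" using ab pq by auto
  then show "\<exists>Y. finite Y \<and> Y \<subseteq> V \<and> separates E Y a b"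
  proof
    assume "p \<noteq> p'"
    then obtain Y where "finite Y" "Y \<subseteq> V" "separates E Y p p'" using adm_sep[OF P pq(3) pq(5)] by blast
    then show ?thesis using separates_mono[of E Y p p' a b] pq by blast
  next
    assume "q \<noteq> q'"
    then obtain Y where "finite Y" "Y \<subseteq> V" "separates E Y q q'" using adm_sep[OF Q pq(4) pq(6)] by blast
    then show ?thesis using separates_mono[of E Y q q' a b] pq by blast
  qed
qed

lemma PM_ref1: "refines_le P (PM P Q)"
  unfolding refines_le_def PM_def by blast

lemma PM_ref2: "refines_le Q (PM P Q)"
  unfolding refines_le_def PM_def by blast

lemma refines_trans: "refines_le P Q \<Longrightarrow> refines_le Q R \<Longrightarrow> refines_le P R"
  unfolding refines_le_def by (meson order_trans)

lemma common_ref: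
  assumes "finite J" "J \<subseteq> adm_parts V E"
  shows "\<exists>Q \<in> adm_parts V E. \<forall>P\<in>J. refines_le P Q"
  using assms
proof (induction J rule: finite_induct)
  case empty
  have "admissible V E (PF V {})" by (rule PF_adm) auto
  then show ?case by (auto simp: adm_parts_def)
next
  case (insert P J)
  then obtain Q where Q: "Q \<in> adm_parts V E" "\<forall>P\<in>J. refines_le P Q" by auto
  have "PM P Q \<in> adm_parts V E" using PM_adm Q insert.prems by (auto simp: adm_parts_def)
  then show ?case using Q PM_ref1[of P Q] PM_ref2[of Q P] refines_trans by blast
qed



definition gphi :: "('v \<times> 'v) set \<Rightarrow> 'v set set \<Rightarrow> 'v \<times> 'v \<Rightarrow> 'v qedge" where
  "gphi E P e = (if QuotE (cls P (fst e)) (cls P (snd e)) \<in> qedges E P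
      then QuotE (cls P (fst e)) (cls P (snd e)) else OrigE e)"

definition gb :: "('v \<times> 'v) set \<Rightarrow> 'v set set \<Rightarrow> 'v set set \<Rightarrow> 'v qedge \<Rightarrow> 'v qedge" where
  "gb E P' P e' = (if QuotE (up P (qsrc P' e')) (up P (qtgt P' e')) \<in> qedges E P
      then QuotE (up P (qsrc P' e')) (up P (qtgt P' e')) else e')"

context
  fixes V :: "'v set" and E :: "('v \<times> 'v) set"
  assumes EV: "E \<subseteq> V \<times> V" and nl: "\<forall>v. (v, v) \<notin> E"
begin

lemma QuotE_in: "p \<in> P \<Longrightarrow> q \<in> P \<Longrightarrow> p \<noteq> q \<Longrightarrow> infinite (edges_between E p q) \<Longrightarrow> QuotE p q \<in> qedges E P"
  by (simp add: qedges_def)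

lemma QuotE_inD: "QuotE p q \<in> qedges E P \<Longrightarrow> p \<in> P \<and> q \<in> P \<and> p \<noteq> q \<and> infinite (edges_between E p q)"
  by (simp add: qedges_def)

lemma OrigE_inD: "OrigE e \<in> qedges E P \<Longrightarrow> e \<in> E \<and> cls P (fst e) \<noteq> cls P (snd e) \<and> finite (edges_between E (cls P (fst e)) (cls P (snd e)))"
  by (auto simp: qedges_def)

lemma OrigE_in: "e \<in> E \<Longrightarrow> cls P (fst e) \<noteq> cls P (snd e) \<Longrightarrow> finite (edges_between E (cls P (fst e)) (cls P (snd e))) \<Longrightarrow> OrigE e \<in> qedges E P"
  unfolding qedges_def by (rule UnI1, rule CollectI, rule exI[of _ e]) simp

lemma eb_mono: "p \<subseteq> p' \<Longrightarrow> q \<subseteq> q' \<Longrightarrow> edges_between E p q \<subseteq> edges_between E p' q'"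
  unfolding edges_between_def by auto

lemma ends_V: "e \<in> E \<Longrightarrow> fst e \<in> V \<and> snd e \<in> V"
  using EV by auto

lemma qedges_ends:
  assumes P: "admissible V E P" and e: "e' \<in> qedges E P"
  shows "qsrc P e' \<in> P \<and> qtgt P e' \<in> P"
proof (cases e')
  case (OrigE e)
  then show ?thesis using OrigE_inD[of e P] e adm_cls[OF P] ends_V[of e] by auto
next
  case (QuotE p q)
  then show ?thesis using QuotE_inD[of p q P] e by auto
qed

lemma qedges_fin:
  assumes P: "admissible V E P"
  shows "finite (qedges E P)"
proof -
  have fP: "finite P" using P by (rule adm_fin)
  let ?A = "\<Union> ((\<lambda>(p,q). if finite (edges_between E p q) then edges_between E p q else {}) ` (P \<times> P))"
  have "qedges E P \<subseteq> OrigE ` ?A \<union> (\<lambda>(p,q). QuotE p q) ` (P \<times> P)"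
  proof
    fix e' assume e': "e' \<in> qedges E P"
    show "e' \<in> OrigE ` ?A \<union> (\<lambda>(p,q). QuotE p q) ` (P \<times> P)"
    proof (cases e')
      case (OrigE e)
      then have e: "e \<in> E" "finite (edges_between E (cls P (fst e)) (cls P (snd e)))" using OrigE_inD e' by auto
      have "cls P (fst e) \<in> P" "cls P (snd e) \<in> P" using adm_cls[OF P] ends_V[OF e(1)] by auto
      moreover have "e \<in> edges_between E (cls P (fst e)) (cls P (snd e))"
        using e adm_cls[OF P] ends_V[OF e(1)] by (auto simp: edges_between_def)
      ultimately have "e \<in> ?A" using e(2) by force
      then show ?thesis using OrigE by blast
    next
      case (QuotE p q)
      then show ?thesis using QuotE_inD e' by force
    qed
  qed
  moreover have "finite ?A" using fP by (auto split: if_splits)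
  ultimately show ?thesis using fP by (meson finite_SigmaI finite_Un finite_imageI finite_subset)
qed

lemma qt_compact: "admissible V E P \<Longrightarrow> compact_space (quot_top E P)"
  unfolding quot_top_def
  by (rule ct_compact) (auto simp: adm_fin qedges_fin qedges_ends)

lemma qt_Hausdorff: "Hausdorff_space (quot_top E P)"
  unfolding quot_top_def by (rule ct_Hausdorff)

lemma gphi_prop:
  assumes P: "admissible V E P" and e: "e \<in> E" and ne: "cls P (fst e) \<noteq> cls P (snd e)"
  shows "gphi E P e \<in> qedges E P \<and> qsrc P (gphi E P e) = cls P (fst e) \<and> qtgt P (gphi E P e) = cls P (snd e)"
proof (cases "QuotE (cls P (fst e)) (cls P (snd e)) \<in> qedges E P")
  case True
  then show ?thesis by (simp add: gphi_def)
next
  case False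
  have "cls P (fst e) \<in> P" "cls P (snd e) \<in> P" using adm_cls[OF P] ends_V[OF e] by auto
  then have "finite (edges_between E (cls P (fst e)) (cls P (snd e)))" using False QuotE_in ne by blast
  then have "OrigE e \<in> qedges E P" using OrigE_in e ne by blast
  then show ?thesis using False by (simp add: gphi_def)
qed

lemma phi_CE:
  "phi E P (CE e x) = (if cls P (fst e) = cls P (snd e) then CV (cls P (fst e)) else CE (gphi E P e) x)"
  by (simp add: Let_def gphi_def)

lemma phi_cont:
  assumes P: "admissible V E P"
  shows "continuous_map (dtop V E) (quot_top E P) (phi E P)"
  unfolding dtop_def quot_top_def
  apply (rule cell_cont[where fv = "cls P" and g = "gphi E P"])
  using adm_cls[OF P] ends_V gphi_prop[OF P] phi_CE by auto

lemma gb_prop: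
  assumes P: "admissible V E P" and P': "admissible V E P'" and r: "refines_le P P'"
    and e': "e' \<in> qedges E P'" and ne: "up P (qsrc P' e') \<noteq> up P (qtgt P' e')"
  shows "gb E P' P e' \<in> qedges E P \<and> qsrc P (gb E P' P e') = up P (qsrc P' e') \<and> qtgt P (gb E P' P e') = up P (qtgt P' e')"
proof (cases "QuotE (up P (qsrc P' e')) (up P (qtgt P' e')) \<in> qedges E P")
  case True
  then show ?thesis by (simp add: gb_def)
next
  case False
  have ends: "qsrc P' e' \<in> P'" "qtgt P' e' \<in> P'" using qedges_ends[OF P' e'] by auto
  have ups: "up P (qsrc P' e') \<in> P" "up P (qtgt P' e') \<in> P"
    "qsrc P' e' \<subseteq> up P (qsrc P' e')" "qtgt P' e' \<subseteq> up P (qtgt P' e')"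
    using up_mem[OF P P' r] ends by auto
  have fin: "finite (edges_between E (up P (qsrc P' e')) (up P (qtgt P' e')))"
    using False QuotE_in ups ne by blast
  show ?thesis
  proof (cases e')
    case (OrigE e)
    then have e: "e \<in> E" using OrigE_inD e' by auto
    have u: "up P (qsrc P' e') = cls P (fst e)" "up P (qtgt P' e') = cls P (snd e)"
      using OrigE cls_up[OF P P' r] ends_V[OF e] by auto
    have "OrigE e \<in> qedges E P" using OrigE_in e ne fin u by auto
    then show ?thesis using False OrigE u by (simp add: gb_def)
  next
    case (QuotE q1 q2)
    then have "infinite (edges_between E q1 q2)" using QuotE_inD e' by auto
    moreover have "edges_between E q1 q2 \<subseteq> edges_between E (up P (qsrc P' e')) (up P (qtgt P' e'))"
      using ups QuotE by (intro eb_mono) auto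
    ultimately show ?thesis using fin finite_subset by blast
  qed
qed

lemma bond_CE:
  "bond E P' P (CE e' x) = (if up P (qsrc P' e') = up P (qtgt P' e') then CV (up P (qsrc P' e')) else CE (gb E P' P e') x)"
  by (simp add: Let_def gb_def)

lemma bond_cont:
  assumes P: "admissible V E P" and P': "admissible V E P'" and r: "refines_le P P'"
  shows "continuous_map (quot_top E P') (quot_top E P) (bond E P' P)"
  unfolding quot_top_def
  apply (rule cell_cont[where fv = "up P" and g = "gb E P' P"])
  using up_mem[OF P P' r] qedges_ends[OF P'] gb_prop[OF P P' r] bond_CE by auto

end



context
  fixes V :: "'v set" and E :: "('v \<times> 'v) set"
  assumes EV: "E \<subseteq> V \<times> V" and nl: "\<forall>v. (v, v) \<notin> E"
begin

lemmas QI = QuotE_in[OF EV nl]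
lemmas QD = QuotE_inD[OF EV nl]
lemmas OD = OrigE_inD[OF EV nl]
lemmas ebm = eb_mono[OF EV nl]

lemma dtop_CV[simp]: "CV v \<in> topspace (dtop V E) \<longleftrightarrow> v \<in> V"
  by (simp add: dtop_def)

lemma dtop_CE[simp]: "CE e x \<in> topspace (dtop V E) \<longleftrightarrow> e \<in> E \<and> 0 < x \<and> x < 1"
  by (simp add: dtop_def)

lemma qt_CV[simp]: "CV p \<in> topspace (quot_top E P) \<longleftrightarrow> p \<in> P"
  by (simp add: quot_top_def)

lemma qt_CE[simp]: "CE e x \<in> topspace (quot_top E P) \<longleftrightarrow> e \<in> qedges E P \<and> 0 < x \<and> x < 1"
  by (simp add: quot_top_def)

lemma bond_phi:
  assumes P: "admissible V E P" and P': "admissible V E P'" and r: "refines_le P P'"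
    and z: "z \<in> topspace (dtop V E)"
  shows "bond E P' P (phi E P' z) = phi E P z"
proof (cases z)
  case (CV v)
  then have "v \<in> V" using z by simp
  then show ?thesis using CV cls_up[OF P P' r] by simp
next
  case (CE e x)
  then have e: "e \<in> E" using z by simp
  let ?a' = "cls P' (fst e)" and ?b' = "cls P' (snd e)" and ?a = "cls P (fst e)" and ?b = "cls P (snd e)"
  have u: "up P ?a' = ?a" "up P ?b' = ?b" using cls_up[OF P P' r] ends_V[OF EV nl e] by auto
  show ?thesis
  proof (cases "?a' = ?b'")
    case True
    then have "?a = ?b" using u by metis
    then show ?thesis using CE True u by (simp add: phi_CE[OF EV nl] del: phi.simps(2))
  next
    case False
    have g: "gphi E P' e \<in> qedges E P'" "qsrc P' (gphi E P' e) = ?a'" "qtgt P' (gphi E P' e) = ?b'"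
      using gphi_prop[OF EV nl P' e False] by auto
    have ph': "phi E P' z = CE (gphi E P' e) x" using CE False by (simp add: phi_CE[OF EV nl] del: phi.simps(2))
    show ?thesis
    proof (cases "?a = ?b")
      case True
      then show ?thesis using ph' g u CE by (simp add: bond_CE[OF EV nl] phi_CE[OF EV nl] del: phi.simps(2) bond.simps(2))
    next
      case False2: False
      show ?thesis
      proof (cases "QuotE ?a ?b \<in> qedges E P")
        case True
        then show ?thesis using ph' g u CE False2 by (simp add: bond_CE[OF EV nl] phi_CE[OF EV nl] gb_def gphi_def del: phi.simps(2) bond.simps(2))
      next
        case False3: False
        have "QuotE ?a' ?b' \<notin> qedges E P'"
        proof
          assume "QuotE ?a' ?b' \<in> qedges E P'"
          then have "infinite (edges_between E ?a' ?b')" using QD by blast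
          moreover have "edges_between E ?a' ?b' \<subseteq> edges_between E ?a ?b"
            using up_mem[OF P P' r] adm_cls[OF P'] ends_V[OF EV nl e] u by (intro ebm) metis+
          moreover have "?a \<in> P" "?b \<in> P" using adm_cls[OF P] ends_V[OF EV nl e] by auto
          ultimately show False using False3 False2 QI finite_subset by metis
        qed
        then have "gphi E P' e = OrigE e" by (simp add: gphi_def)
        then show ?thesis using ph' g u CE False2 False3 by (simp add: bond_CE[OF EV nl] phi_CE[OF EV nl] gb_def gphi_def del: phi.simps(2) bond.simps(2))
      qed
    qed
  qed
qed

lemma phi_surj:
  assumes P: "admissible V E P" and y: "y \<in> topspace (quot_top E P)"
  shows "\<exists>z \<in> topspace (dtop V E). phi E P z = y"
proof (cases y)
  case (CV p)
  then have p: "p \<in> P" using y by simp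
  then obtain v where v: "v \<in> p" using adm_ne[OF P] by blast
  then have "v \<in> V" "cls P v = p" using adm_sub[OF P p] adm_cls_eq[OF P p v] by auto
  then show ?thesis using CV by (intro bexI[of _ "CV v"]) auto
next
  case (CE e' x)
  then have e': "e' \<in> qedges E P" "0 < x" "x < 1" using y by auto
  show ?thesis
  proof (cases e')
    case (OrigE e)
    then have e: "e \<in> E" "cls P (fst e) \<noteq> cls P (snd e)" "finite (edges_between E (cls P (fst e)) (cls P (snd e)))"
      using OD e' by auto
    then have "QuotE (cls P (fst e)) (cls P (snd e)) \<notin> qedges E P" using QD by blast
    then have "phi E P (CE e x) = y" using CE OrigE e by (simp add: phi_CE[OF EV nl] gphi_def del: phi.simps(2))
    then show ?thesis using e e' by (intro bexI[of _ "CE e x"]) auto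
  next
    case (QuotE p q)
    then have pq: "p \<in> P" "q \<in> P" "p \<noteq> q" "infinite (edges_between E p q)" using QD e' by auto
    then obtain e where e: "e \<in> edges_between E p q" by (metis finite.emptyI ex_in_conv)
    then have eE: "e \<in> E" "fst e \<in> p" "snd e \<in> q" by (auto simp: edges_between_def)
    then have "cls P (fst e) = p" "cls P (snd e) = q" using adm_cls_eq[OF P] pq by auto
    then have "phi E P (CE e x) = y" using CE QuotE e' pq by (simp add: phi_CE[OF EV nl] gphi_def del: phi.simps(2))
    then show ?thesis using eE e' by (intro bexI[of _ "CE e x"]) auto
  qed
qed

lemma PF_cls2: "finite F \<Longrightarrow> F \<subseteq> V \<Longrightarrow> u \<in> V \<Longrightarrow> u \<notin> F \<Longrightarrow> cls (PF V F) u = V - F"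
  by (rule adm_cls_eq[OF PF_adm]) (auto simp: PF_def)

lemma phi_PF_CV: "finite F \<Longrightarrow> F \<subseteq> V \<Longrightarrow> u \<in> F \<Longrightarrow> phi E (PF V F) (CV u) = CV {u}"
  by (simp add: PF_cls)

lemma eb_single: "edges_between E {a} {b} \<subseteq> {(a,b)}"
  unfolding edges_between_def by auto

lemma phi_PF_CE:
  assumes F: "finite F" "F \<subseteq> V" and e: "e \<in> E" "fst e \<in> F" "snd e \<in> F"
  shows "phi E (PF V F) (CE e x) = CE (OrigE e) x"
proof -
  have c: "cls (PF V F) (fst e) = {fst e}" "cls (PF V F) (snd e) = {snd e}" using PF_cls[OF F(1) F(2) e(2)] PF_cls[OF F(1) F(2) e(3)] by auto
  have ne: "fst e \<noteq> snd e" using nl e by (metis prod.collapse)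
  have "finite (edges_between E {fst e} {snd e})" using eb_single finite_subset by blast
  then have "QuotE {fst e} {snd e} \<notin> qedges E (PF V F)" using QD by blast
  then show ?thesis using c ne by (simp add: phi_CE[OF EV nl] gphi_def del: phi.simps(2))
qed

fun verts :: "('v, 'v \<times> 'v) cpt \<Rightarrow> 'v set" where
  "verts (CV v) = {v}"
| "verts (CE e x) = {fst e, snd e}"

lemma verts_sub: "z \<in> topspace (dtop V E) \<Longrightarrow> verts z \<subseteq> V \<and> finite (verts z)"
  by (cases z) (auto dest: ends_V[OF EV nl])

lemma phi_inj:
  assumes z1: "z1 \<in> topspace (dtop V E)" and z2: "z2 \<in> topspace (dtop V E)"
    and eq: "phi E (PF V (verts z1 \<union> verts z2)) z1 = phi E (PF V (verts z1 \<union> verts z2)) z2"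
  shows "z1 = z2"
proof -
  let ?F = "verts z1 \<union> verts z2"
  have F: "finite ?F" "?F \<subseteq> V" using verts_sub[OF z1] verts_sub[OF z2] by auto
  have im: "phi E (PF V ?F) z = (case z of CV u \<Rightarrow> CV {u} | CE e x \<Rightarrow> CE (OrigE e) x)"
    if "z \<in> topspace (dtop V E)" "verts z \<subseteq> ?F" for z
    using that phi_PF_CV[OF F] phi_PF_CE[OF F] by (cases z) auto
  have "(case z1 of CV u \<Rightarrow> CV {u} | CE e x \<Rightarrow> CE (OrigE e) x) = (case z2 of CV u \<Rightarrow> CV {u} | CE e x \<Rightarrow> CE (OrigE e) x)"
    using im[OF z1] im[OF z2] eq by auto
  then show ?thesis by (cases z1; cases z2) auto
qed

lemma gen_star:
  assumes v: "v \<in> V" and eps: "0 < eps"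
  shows "{z \<in> topspace (dtop V E). phi E (PF V {v}) z \<in> cstar (qedges E (PF V {v})) (qsrc (PF V {v})) (qtgt (PF V {v})) {v} eps}
     = cstar E fst snd v eps"
proof (rule set_eqI)
  let ?P = "PF V {v}"
  have P: "admissible V E ?P" by (rule PF_adm) (use v in auto)
  have cv: "cls ?P u = {v} \<longleftrightarrow> u = v" if "u \<in> V" for u
    using that PF_cls[of "{v}" V v] PF_cls2[of "{v}" u] v by auto
  fix z
  show "z \<in> {z \<in> topspace (dtop V E). phi E ?P z \<in> cstar (qedges E ?P) (qsrc ?P) (qtgt ?P) {v} eps} \<longleftrightarrow>
        z \<in> cstar E fst snd v eps"
  proof (cases z)
    case (CV u)
    then show ?thesis using cv v by (auto simp: cstar_def)
  next
    case (CE e x)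
    show ?thesis
    proof (cases "e \<in> E \<and> 0 < x \<and> x < 1")
      case False
      then show ?thesis using CE by auto
    next
      case True
      then have ee: "fst e \<in> V" "snd e \<in> V" "fst e \<noteq> snd e" using ends_V[OF EV nl] nl by (auto, metis prod.collapse)
      show ?thesis
      proof (cases "cls ?P (fst e) = cls ?P (snd e)")
        case True2: True
        then have "fst e \<noteq> v" "snd e \<noteq> v" using cv[OF ee(1)] cv[OF ee(2)] ee(3) by metis+
        then show ?thesis using CE True True2 cv ee by (auto simp: phi_CE[OF EV nl] simp del: phi.simps(2))
      next
        case False2: False
        then show ?thesis using CE True cv ee gphi_prop[OF EV nl P, of e] by (auto simp: phi_CE[OF EV nl] simp del: phi.simps(2))
      qed
    qed
  qed
qed

lemma gen_int:
  assumes e: "e \<in> E" and ab: "0 \<le> a" "a < b" "b \<le> 1"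
  shows "{z \<in> topspace (dtop V E). phi E (PF V {fst e, snd e}) z \<in> {CE (OrigE e) x | x. a < x \<and> x < b}}
     = {CE e x | x. a < x \<and> x < b}"
proof (rule set_eqI)
  let ?F = "{fst e, snd e}"
  let ?P = "PF V ?F"
  have F: "finite ?F" "?F \<subseteq> V" using ends_V[OF EV nl e] by auto
  have P: "admissible V E ?P" by (rule PF_adm) (use F in auto)
  fix z
  show "z \<in> {z \<in> topspace (dtop V E). phi E ?P z \<in> {CE (OrigE e) x | x. a < x \<and> x < b}} \<longleftrightarrow>
        z \<in> {CE e x | x. a < x \<and> x < b}"
  proof (cases z)
    case (CV u)
    then show ?thesis by auto
  next
    case (CE e' x)
    show ?thesis
    proof (cases "e' \<in> E \<and> 0 < x \<and> x < 1")
      case False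
      then show ?thesis using CE ab e by auto
    next
      case True
      show ?thesis
      proof (cases "e' = e")
        case True2: True
        then show ?thesis using CE True phi_PF_CE[OF F e] by auto
      next
        case False2: False
        have "gphi E ?P e' \<noteq> OrigE e" using False2 by (simp add: gphi_def)
        then show ?thesis using CE True False2 by (auto simp: phi_CE[OF EV nl] simp del: phi.simps(2))
      qed
    qed
  qed
qed

end



theorem theorem4p1:
  fixes V :: "'v set" and E :: "('v \<times> 'v) set"
  assumes "E \<subseteq> V \<times> V" and "\<forall>v. (v, v) \<notin> E"
  shows "compact_space (invlim_top V E)
       \<and> Hausdorff_space (invlim_top V E)
       \<and> embedding_map (dtop V E) (invlim_top V E) (Phi V E)
       \<and> (invlim_top V E) closure_of (Phi V E ` topspace (dtop V E)) = topspace (invlim_top V E)"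
proof -
  note EV = assms(1) and nl = assms(2)
  define I where "I = adm_parts V E"
  define X where "X = quot_top E"
  define PT where "PT = product_topology X I"
  define L where "L = {x. \<forall>P\<in>I. \<forall>P'\<in>I. refines_le P P' \<longrightarrow> bond E P' P (x P') = x P}"
  define Dt where "Dt = dtop V E"
  have IL: "invlim_top V E = subtopology PT L"
    by (simp add: invlim_top_def PT_def X_def I_def L_def)
  have admI: "P \<in> I \<longleftrightarrow> admissible V E P" for P by (simp add: I_def adm_parts_def)
  have PhiP: "Phi V E z P = phi E P z" if "P \<in> I" for z P
    using that by (simp add: Phi_def I_def)
  have phic: "continuous_map Dt (X P) (phi E P)" if "P \<in> I" for P
    using phi_cont[OF EV nl] that by (simp add: admI Dt_def X_def)
  have cPT: "compact_space PT"
    unfolding PT_def by (simp add: compact_space_product_topology X_def qt_compact[OF EV nl] admI)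
  have clo: "closedin PT (topspace PT \<inter> L)"
  proof -
    let ?K = "{{x \<in> topspace PT. bond E P' P (x P') = x P} | P P'. P \<in> I \<and> P' \<in> I \<and> refines_le P P'}"
    have eq: "topspace PT \<inter> L = \<Inter> (insert (topspace PT) ?K)"
      unfolding L_def by blast
    have "closedin PT S" if "S \<in> ?K" for S
    proof -
      obtain P P' where S: "S = {x \<in> topspace PT. bond E P' P (x P') = x P}" and P: "P \<in> I" "P' \<in> I" "refines_le P P'"
        using \<open>S \<in> ?K\<close> by blast
      have c1: "continuous_map PT (X P) (\<lambda>x. bond E P' P (x P'))"
      proof -
        have "continuous_map PT (X P) (bond E P' P \<circ> (\<lambda>x. x P'))"
          apply (rule continuous_map_compose[where X' = "X P'"])
          unfolding PT_def using P apply (simp add: continuous_map_product_projection)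
          using bond_cont[OF EV nl] P by (simp add: X_def admI)
        then show ?thesis by (simp add: o_def)
      qed
      have c2: "continuous_map PT (X P) (\<lambda>x. x P)"
        unfolding PT_def using P by (simp add: continuous_map_product_projection)
      show ?thesis unfolding S
        by (rule closedin_continuous_maps_eq[OF _ c1 c2]) (simp add: X_def qt_Hausdorff[OF EV nl])
    qed
    then show ?thesis unfolding eq by (intro closedin_Inter) auto
  qed
  have compact: "compact_space (invlim_top V E)"
    unfolding IL subtopology_restrict[of PT L, symmetric]
    by (rule compact_space_subtopology[OF closedin_compact_space[OF cPT clo]])
  have haus: "Hausdorff_space (invlim_top V E)"
    unfolding IL PT_def
    by (intro Hausdorff_space_subtopology) (simp add: Hausdorff_space_product_topology X_def qt_Hausdorff[OF EV nl])
  have contPT: "continuous_map Dt PT (Phi V E)"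
    unfolding PT_def continuous_map_componentwise
  proof (intro conjI ballI)
    show "Phi V E ` topspace Dt \<subseteq> extensional I" by (auto simp: Phi_def I_def)
    fix k assume k: "k \<in> I"
    show "continuous_map Dt (X k) (\<lambda>x. Phi V E x k)"
      by (rule continuous_map_eq[OF phic[OF k]]) (simp add: PhiP[OF k])
  qed
  have inL: "Phi V E z \<in> L" if "z \<in> topspace Dt" for z
    unfolding L_def using bond_phi[OF EV nl] that PhiP by (simp add: admI Dt_def)
  have inj: "inj_on (Phi V E) (topspace Dt)"
  proof (rule inj_onI)
    fix z1 z2 assume z: "z1 \<in> topspace Dt" "z2 \<in> topspace Dt" and eq: "Phi V E z1 = Phi V E z2"
    let ?F = "verts z1 \<union> verts z2"
    have F: "finite ?F" "?F \<subseteq> V" using verts_sub[OF EV nl] z by (auto simp: Dt_def)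
    have "PF V ?F \<in> I" using PF_adm[OF F] by (auto simp: admI)
    then have "phi E (PF V ?F) z1 = phi E (PF V ?F) z2" using eq PhiP by metis
    then show "z1 = z2" using phi_inj[OF EV nl] z by (auto simp: Dt_def)
  qed
  let ?S = "Phi V E ` topspace Dt"
  have gen: "\<exists>P\<in>I. \<exists>W. openin (X P) W \<and> U = {z \<in> topspace Dt. phi E P z \<in> W}"
    if "U \<in> {cstar E fst snd n eps | n eps. n \<in> V \<and> 0 < eps}
      \<union> {{CE e t | t. a < t \<and> t < b} | e a b. e \<in> E \<and> 0 \<le> a \<and> a < b \<and> b \<le> 1}" for U
    using that
  proof (elim UnE CollectE exE conjE)
    fix v eps assume U: "U = cstar E fst snd v eps" and v: "v \<in> V" and eps: "0 < eps"
    have P: "PF V {v} \<in> I" using PF_adm[of "{v}" V E] v by (auto simp: admI)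
    show ?thesis
      apply (rule bexI[OF _ P], rule exI[of _ "cstar (qedges E (PF V {v})) (qsrc (PF V {v})) (qtgt (PF V {v})) {v} eps"])
      using gen_star[OF EV nl v eps] P eps U
      by (auto simp: X_def quot_top_def Dt_def admI PF_def intro!: ct_open_star)
  next
    fix e a b assume U: "U = {CE e t | t. a < t \<and> t < b}" and e: "e \<in> E" and ab: "0 \<le> a" "a < b" "b \<le> 1"
    have F: "finite {fst e, snd e}" "{fst e, snd e} \<subseteq> V" using EV e by auto
    have P: "PF V {fst e, snd e} \<in> I" using PF_adm[OF F] by (auto simp: admI)
    have oe: "OrigE e \<in> qedges E (PF V {fst e, snd e})"
    proof -
      have "phi E (PF V {fst e, snd e}) (CE e (1/2)) = CE (OrigE e) (1/2)"
        using phi_PF_CE[OF EV nl F e] by simp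
      moreover have "phi E (PF V {fst e, snd e}) (CE e (1/2)) \<in> topspace (X (PF V {fst e, snd e}))"
      proof -
        have "CE e (1/2) \<in> topspace Dt" using e by (simp add: Dt_def dtop_def)
        then show ?thesis using continuous_map_image_subset_topspace[OF phic[OF P]] by blast
      qed
      ultimately show ?thesis by (simp add: X_def quot_top_def)
    qed
    show ?thesis
      apply (rule bexI[OF _ P], rule exI[of _ "{CE (OrigE e) x | x. a < x \<and> x < b}"])
      using gen_int[OF EV nl e ab] U oe ab
      by (auto simp: X_def quot_top_def Dt_def intro!: ct_open_int)
  qed
  have om: "open_map Dt (subtopology PT ?S) (Phi V E)"
    unfolding open_map_def
  proof (intro allI impI)
    fix U assume "openin Dt U"
    then have "generate_topology_on ({cstar E fst snd n eps | n eps. n \<in> V \<and> 0 < eps}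
      \<union> {{CE e t | t. a < t \<and> t < b} | e a b. e \<in> E \<and> 0 \<le> a \<and> a < b \<and> b \<le> 1}) U"
      by (simp add: Dt_def dtop_def complex_top_def openin_topology_generated_by_iff)
    then have "U \<subseteq> topspace Dt \<and> openin (subtopology PT ?S) (Phi V E ` U)"
    proof (induction rule: generate_topology_on.induct)
      case Empty
      then show ?case by simp
    next
      case (Int a b)
      have "Phi V E ` (a \<inter> b) = Phi V E ` a \<inter> Phi V E ` b"
        using Int.IH inj by (intro inj_on_image_Int) auto
      then show ?case using Int.IH by auto
    next
      case (UN K)
      then show ?case by (auto simp: image_Union intro!: openin_Union)
    next
      case (Basis U)
      from gen[OF Basis] obtain P W where P: "P \<in> I" and W: "openin (X P) W"
        and U: "U = {z \<in> topspace Dt. phi E P z \<in> W}" by blast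
      have o: "openin PT {y \<in> topspace PT. y P \<in> W}"
        by (rule openin_continuous_map_preimage[OF _ W]) (simp add: PT_def continuous_map_product_projection P)
      have "Phi V E ` U = {y \<in> topspace PT. y P \<in> W} \<inter> ?S"
      proof
        show "Phi V E ` U \<subseteq> {y \<in> topspace PT. y P \<in> W} \<inter> ?S"
          using U contPT continuous_map_image_subset_topspace PhiP[OF P] by fastforce
        show "{y \<in> topspace PT. y P \<in> W} \<inter> ?S \<subseteq> Phi V E ` U"
          using U PhiP[OF P] by auto
      qed
      then show ?case using o U by (auto simp: openin_subtopology)
    qed
    then show "openin (subtopology PT ?S) (Phi V E ` U)" by blast
  qed
  have emb0: "embedding_map Dt (subtopology PT ?S) (Phi V E)"
    by (rule injective_open_imp_embedding_map[OF _ om inj]) (simp add: continuous_map_in_subtopology contPT)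
  have emb: "embedding_map (dtop V E) (invlim_top V E) (Phi V E)"
    unfolding IL Dt_def[symmetric] embedding_map_in_subtopology
    using emb0 inL unfolding embedding_map_in_subtopology by blast
  have dense: "(invlim_top V E) closure_of ?S = topspace (invlim_top V E)"
    unfolding dense_intersects_open
  proof (intro allI impI, elim conjE)
    fix T assume "openin (invlim_top V E) T" and "T \<noteq> {}"
    then obtain S' where S': "openin PT S'" "T = S' \<inter> L" by (auto simp: IL openin_subtopology)
    obtain x where x: "x \<in> T" using \<open>T \<noteq> {}\<close> by blast
    then have xS': "x \<in> S'" and xL: "x \<in> L" using S' by auto
    obtain Xs where Xs: "x \<in> (\<Pi>\<^sub>E i\<in>I. Xs i)" "\<And>i. openin (X i) (Xs i)"
      "finite {i. Xs i \<noteq> topspace (X i)}" "(\<Pi>\<^sub>E i\<in>I. Xs i) \<subseteq> S'"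
      using product_topology_open_contains_basis[OF S'(1)[unfolded PT_def] xS'] by blast
    let ?J = "{i \<in> I. Xs i \<noteq> topspace (X i)}"
    have fJ: "finite ?J" using Xs(3) by (rule rev_finite_subset) auto
    have sJ: "?J \<subseteq> adm_parts V E" by (auto simp: I_def)
    obtain Q where Q: "Q \<in> I" "\<forall>P\<in>?J. refines_le P Q"
      using common_ref[OF fJ sJ] unfolding I_def by blast
    have "x Q \<in> topspace (X Q)" using Xs(1,2) Q(1) openin_subset by (fastforce simp: PiE_iff)
    then obtain z where z: "z \<in> topspace Dt" "phi E Q z = x Q"
      using phi_surj[OF EV nl] Q(1) by (auto simp: admI X_def Dt_def)
    have "Phi V E z \<in> (\<Pi>\<^sub>E i\<in>I. Xs i)"
    proof (subst PiE_iff, intro conjI ballI)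
      show "Phi V E z \<in> extensional I" by (simp add: Phi_def I_def)
      fix P assume P: "P \<in> I"
      show "Phi V E z P \<in> Xs P"
      proof (cases "P \<in> ?J")
        case True
        then have r: "refines_le P Q" using Q by auto
        have "phi E P z = bond E Q P (phi E Q z)"
          using bond_phi[OF EV nl] P Q(1) r z(1) by (simp add: admI Dt_def)
        also have "\<dots> = x P" using z(2) xL P Q(1) r by (simp add: L_def)
        finally show ?thesis using Xs(1) P PhiP[OF P] by (auto simp: PiE_iff)
      next
        case False
        then have "Xs P = topspace (X P)" using P by auto
        then show ?thesis using phic[OF P] z(1) PhiP[OF P] continuous_map_image_subset_topspace by fastforce
      qed
    qed
    then have "Phi V E z \<in> T" using Xs(4) S'(2) inL[OF z(1)] by auto
    then show "?S \<inter> T \<noteq> {}" using z(1) by blast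
  qed
  show ?thesis using compact haus emb dense by (simp add: Dt_def)
qed

end
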